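(* Let $k\geq 2$ and $p\geq 0$ be integers and let $n=2(p+1)k+2$. Let \[ G=K_{1}\vee\big((pK_{2k})\cup K_{2k+1}\big), \] i.e. the graph obtained by taking the disjoint union of $p$ copies of $K_{2k}$ and one copy of $K_{2k+1}$ and adding one new vertex adjacent to all of its vertices. If $n\geq 6k+13$, then $q(G)<n+2k-2$.
   Context: All graphs are finite and simple. $K_r$ denotes the complete graph on $r$ vertices. For a graph $G$, the signless Laplacian is $Q(G)=D(G)+A(G)$, where $D(G)$ is the diagonal matrix of vertex degrees and $A(G)$ is the adjacency matrix; $q(G)$ denotes the largest eigenvalue of $Q(G)$. *)

theory Defs
  imports "Jordan_Normal_Form.Char_Poly"
begin

definition simple_graph :: "nat \<Rightarrow> (nat \<Rightarrow> nat \<Rightarrow> bool) \<Rightarrow> bool" where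
  "simple_graph N E \<longleftrightarrow> (\<forall>i<N. \<forall>j<N. E i j = E j i) \<and> (\<forall>i<N. \<not> E i i)"

definition degree :: "nat \<Rightarrow> (nat \<Rightarrow> nat \<Rightarrow> bool) \<Rightarrow> nat \<Rightarrow> nat" where
  "degree N E i = card {j. j < N \<and> E i j}"

definition adj_matrix :: "nat \<Rightarrow> (nat \<Rightarrow> nat \<Rightarrow> bool) \<Rightarrow> real mat" where
  "adj_matrix N E = mat N N (\<lambda>(i,j). if E i j then 1 else 0)"

definition deg_matrix :: "nat \<Rightarrow> (nat \<Rightarrow> nat \<Rightarrow> bool) \<Rightarrow> real mat" where
  "deg_matrix N E = mat N N (\<lambda>(i,j). if i = j then real (degree N E i) else 0)"

definition signless_laplacian :: "nat \<Rightarrow> (nat \<Rightarrow> nat \<Rightarrow> bool) \<Rightarrow> real mat" where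
  "signless_laplacian N E = deg_matrix N E + adj_matrix N E"

text \<open>q(G): the largest eigenvalue of Q(G) (Q is real symmetric, so all eigenvalues are real).\<close>
definition q_index :: "nat \<Rightarrow> (nat \<Rightarrow> nat \<Rightarrow> bool) \<Rightarrow> real" where
  "q_index N E = Max {l. eigenvalue (signless_laplacian N E) l}"

text \<open>The graph K_1 join ((p K_{2k}) union K_{2k+1}) on vertices {0..<2(p+1)k+2}:
  vertex 0 is the apex; a vertex v \<ge> 1 lies in clique number min ((v-1) div (2k)) p,
  cliques 0..p-1 have 2k vertices, clique p has the last 2k+1 vertices.\<close>
definition clique_of :: "nat \<Rightarrow> nat \<Rightarrow> nat \<Rightarrow> nat" where
  "clique_of k p v = min ((v - 1) div (2 * k)) p"

definition join_graph :: "nat \<Rightarrow> nat \<Rightarrow> nat \<Rightarrow> nat \<Rightarrow> bool" where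
  "join_graph k p i j \<longleftrightarrow> i \<noteq> j \<and> (i = 0 \<or> j = 0 \<or> clique_of k p i = clique_of k p j)"

end

theory Submission
  imports Defs
begin

lemma Qv_entry:
  assumes v: "v \<in> carrier_vec N" and i: "i < N"
  shows "(signless_laplacian N E *\<^sub>v v) $ i
         = real (degree N E i) * v $ i + (\<Sum>j\<in>{j. j < N \<and> E i j}. v $ j)"
proof -
  have "(signless_laplacian N E *\<^sub>v v) $ i
      = (\<Sum>j<N. ((if i = j then real (degree N E i) else 0) + (if E i j then 1 else 0)) * v $ j)"
    using v i unfolding signless_laplacian_def deg_matrix_def adj_matrix_def
    by (simp add: scalar_prod_def lessThan_atLeast0)
  also have "\<dots> = (\<Sum>j<N. (if i = j then real (degree N E i) * v $ j else 0)
                 + (if E i j then v $ j else 0))"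
    by (rule sum.cong) (auto simp: algebra_simps)
  also have "\<dots> = (\<Sum>j<N. (if i = j then real (degree N E i) * v $ j else 0))
                 + (\<Sum>j<N. (if E i j then v $ j else 0))"
    by (rule sum.distrib)
  also have "(\<Sum>j<N. (if i = j then real (degree N E i) * v $ j else 0))
       = real (degree N E i) * v $ i"
    using i by (simp add: sum.delta)
  also have "(\<Sum>j<N. (if E i j then v $ j else 0)) = (\<Sum>j\<in>{j. j < N \<and> E i j}. v $ j)"
    by (simp add: sum.inter_filter[symmetric] lessThan_def Collect_conj_eq Int_commute)
  finally show ?thesis .
qed

definition KK :: "nat \<Rightarrow> nat \<Rightarrow> nat \<Rightarrow> nat \<Rightarrow> nat set" where
  "KK k p N i = {j. 1 \<le> j \<and> j < N \<and> clique_of k p j = clique_of k p i}"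

lemma nbrs:
  assumes "1 \<le> i" "i < N"
  shows "{j. j < N \<and> join_graph k p i j} = insert 0 (KK k p N i - {i})"
  using assms unfolding KK_def join_graph_def by auto

lemma nbrs0:
  shows "{j. j < N \<and> join_graph k p 0 j} = {1..<N}"
  unfolding join_graph_def by auto

lemma deg_i:
  assumes "1 \<le> i" "i < N"
  shows "degree N (join_graph k p) i = card (KK k p N i)"
proof -
  have fin: "finite (KK k p N i)" unfolding KK_def by auto
  have iK: "i \<in> KK k p N i" using assms unfolding KK_def by auto
  have "0 \<notin> KK k p N i - {i}" unfolding KK_def by auto
  then have "card (insert 0 (KK k p N i - {i})) = Suc (card (KK k p N i) - 1)"
    using fin iK by (simp add: card_Diff_singleton)
  also have "\<dots> = card (KK k p N i)" using iK fin
    by (metis Suc_diff_1 card_gt_0_iff empty_iff)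
  finally show ?thesis unfolding degree_def nbrs[OF assms] .
qed

lemma deg_0:
  shows "degree N (join_graph k p) 0 = N - 1"
  unfolding degree_def nbrs0 by simp

lemma card_KK:
  assumes k: "k \<ge> 1" and N: "N = 2 * (p + 1) * k + 2"
  shows "card (KK k p N i) \<le> 2 * k + 1"
proof -
  define c where "c = clique_of k p i"
  have sub: "KK k p N i \<subseteq> {2*k*c+1 ..< 2*k*c+2*k+2}"
  proof
    fix j assume "j \<in> KK k p N i"
    then have j: "1 \<le> j" "j < N" "min ((j - 1) div (2 * k)) p = c"
      unfolding KK_def c_def clique_of_def by auto
    have kp: "0 < 2 * k" using k by simp
    define D where "D = (j - 1) div (2 * k)"
    define M where "M = (j - 1) mod (2 * k)"
    have dm: "j - 1 = 2*k*D + M" unfolding D_def M_def by simp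
    have md: "M < 2*k" using kp unfolding M_def by simp
    show "j \<in> {2*k*c+1 ..< 2*k*c+2*k+2}"
    proof (cases "D < p")
      case True
      then have "c = D" using j unfolding D_def by simp
      have "2*k*D + 1 \<le> j" "j < 2*k*D+2*k+2" using dm md j(1) by linarith+
      then show ?thesis using \<open>c = D\<close> by simp
    next
      case False
      then have "c = p" using j unfolding D_def by simp
      have "2*k*p \<le> 2*k*D" using False by simp
      moreover have N': "N = 2*k*p + 2*k + 2" using N by (simp add: algebra_simps)
      ultimately have "2*k*p + 1 \<le> j" "j < 2*k*p+2*k+2" using dm j(1,2) by linarith+
      then show ?thesis using \<open>c = p\<close> by simp
    qed
  qed
  have "card (KK k p N i) \<le> card {2*k*c+1 ..< 2*k*c+2*k+2}"
    by (rule card_mono[OF _ sub]) simp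
  then show ?thesis by simp
qed

lemma KK_same:
  assumes "j \<in> KK k p N i"
  shows "KK k p N j = KK k p N i"
  using assms unfolding KK_def by auto

lemma KK_fin: "finite (KK k p N i)" unfolding KK_def by auto

lemma KK_sub: "KK k p N i \<subseteq> {1..<N}" unfolding KK_def by auto

lemma final_arith:
  fixes l n k :: real
  assumes "k \<ge> 2" "n \<ge> 6 * k + 13" "l \<ge> n + 2 * k - 2"
    and "(l - n + 1) * (l - 4 * k - 1) \<le> n - 1"
  shows False
proof -
  have a: "l - n + 1 \<ge> 3" using assms by linarith
  have b: "l - 4 * k - 1 \<ge> n - 2 * k - 3" using assms by linarith
  have b0: "n - 2 * k - 3 \<ge> 0" using assms by linarith
  have "3 * (n - 2 * k - 3) \<le> (l - n + 1) * (l - 4 * k - 1)"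
    by (rule mult_mono[OF a b]) (use a b0 in linarith)+
  then have "3 * (n - 2 * k - 3) \<le> n - 1" using assms(4) by (rule order_trans)
  then have "3*n - 6*k - 9 \<le> n - 1" by (simp add: algebra_simps)
  then show False using assms(1,2) by linarith
qed

theorem corollary1:
  fixes k p n :: nat
  assumes "k \<ge> 2"
    and "n = 2 * (p + 1) * k + 2"
    and "n \<ge> 6 * k + 13"
  shows "q_index n (join_graph k p) < real n + 2 * real k - 2"
proof -
  define Q where "Q = signless_laplacian n (join_graph k p)"
  define K where "K = KK k p n"
  define B where "B = real n + 2 * real k - 2"
  have Qc: "Q \<in> carrier_mat n n"
    unfolding Q_def signless_laplacian_def deg_matrix_def adj_matrix_def by simp
  have Qi: "(Q *\<^sub>v v) $ i = real (card (K i)) * v $ i + v $ 0 + (\<Sum>j\<in>K i. v $ j) - v $ i"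
    if v: "v \<in> carrier_vec n" and i: "1 \<le> i" "i < n" for v i
  proof -
    have iK: "i \<in> K i" using i unfolding K_def KK_def by auto
    have "(\<Sum>j\<in>insert 0 (K i - {i}). v $ j) = v $ 0 + (\<Sum>j\<in>K i - {i}. v $ j)"
      by (rule sum.insert) (auto simp: K_def KK_def)
    also have "(\<Sum>j\<in>K i - {i}. v $ j) = (\<Sum>j\<in>K i. v $ j) - v $ i"
      using iK by (simp add: sum_diff1 K_def KK_fin)
    finally show ?thesis
      unfolding Q_def using Qv_entry[OF v i(2), of "join_graph k p"]
      by (simp add: nbrs[OF i] deg_i[OF i] K_def)
  qed
  have Q0: "(Q *\<^sub>v v) $ 0 = real (n - 1) * v $ 0 + (\<Sum>j\<in>{1..<n}. v $ j)"
    if v: "v \<in> carrier_vec n" for v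
    unfolding Q_def using Qv_entry[OF v, of 0 "join_graph k p"] assms
    by (simp add: nbrs0 deg_0)
  have cardK: "real (card (K i)) \<le> 2 * real k + 1" for i
  proof -
    have "card (K i) \<le> 2 * k + 1" unfolding K_def
      by (rule card_KK) (use assms in auto)
    then show ?thesis by linarith
  qed
  have Ksame: "K j = K i" if "j \<in> K i" for i j using KK_same that unfolding K_def by blast
  have Kfin: "finite (K i)" for i unfolding K_def by (rule KK_fin)
  have Ksub: "K i \<subseteq> {1..<n}" for i unfolding K_def by (rule KK_sub)
  define S where "S = {l. eigenvalue Q l}"
  have fin: "finite S"
  proof -
    have "char_poly Q \<noteq> 0"
      using degree_monic_char_poly[OF Qc] by (metis coeff_0 zero_neq_one)
    then have "finite {x. poly (char_poly Q) x = 0}" by (rule poly_roots_finite)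
    moreover have "S = {x. poly (char_poly Q) x = 0}"
      unfolding S_def using eigenvalue_root_char_poly[OF Qc] by auto
    ultimately show ?thesis by simp
  qed
  have ne: "S \<noteq> {}"
  proof -
    define a where "a = n - 1"
    define b where "b = n - 2"
    have ab: "1 \<le> b" "b < a" "a < n" using assms unfolding a_def b_def by auto
    have cl: "clique_of k p a = p" "clique_of k p b = p"
    proof -
      have "2 * k * p \<le> b - 1" "2 * k * p \<le> a - 1"
        using assms unfolding a_def b_def by (auto simp: algebra_simps)
      then have "p \<le> (b - 1) div (2 * k)" "p \<le> (a - 1) div (2 * k)"
        using assms by (auto simp: less_eq_div_iff_mult_less_eq mult.commute)
      then show "clique_of k p a = p" "clique_of k p b = p"
        unfolding clique_of_def by auto
    qed
    have bK: "b \<in> K a" "a \<in> K a" using ab cl unfolding K_def KK_def by auto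
    define v :: "real vec" where "v = vec n (\<lambda>j. if j = a then 1 else if j = b then -1 else 0)"
    have vc: "v \<in> carrier_vec n" unfolding v_def by simp
    have sumK: "(\<Sum>j\<in>K i. v $ j) = 0" for i
    proof (cases "a \<in> K i")
      case True
      then have "K i = K a" using Ksame by auto
      then have bi: "b \<in> K i" using bK by simp
      have "(\<Sum>j\<in>K i. v $ j) = (\<Sum>j\<in>K i. (if j = a then 1 else 0) + (if j = b then -1 else 0))"
      proof (rule sum.cong)
        fix x assume x: "x \<in> K i"
        then have "x < n" using Ksub[of i] by auto
        then show "v $ x = (if x = a then 1 else 0) + (if x = b then -1 else 0)"
          using ab by (simp add: v_def)
      qed simp
      also have "\<dots> = (\<Sum>j\<in>K i. (if j = a then 1 else 0)) + (\<Sum>j\<in>K i. (if j = b then -1 else 0))"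
        by (rule sum.distrib)
      also have "\<dots> = 0" using True bi Kfin[of i] by (simp only: sum.delta) simp
      finally show ?thesis .
    next
      case False
      then have "b \<notin> K i" using bK Ksame by metis
      have "(\<Sum>j\<in>K i. v $ j) = (\<Sum>j\<in>K i. 0)"
      proof (rule sum.cong)
        fix x assume x: "x \<in> K i"
        then have "x < n" using Ksub[of i] by auto
        moreover have "x \<noteq> a" "x \<noteq> b" using x False \<open>b \<notin> K i\<close> by auto
        ultimately show "v $ x = 0" by (simp add: v_def)
      qed simp
      then show ?thesis by simp
    qed
    have sum1: "(\<Sum>j\<in>{1..<n}. v $ j) = 0"
    proof -
      have "(\<Sum>j\<in>{1..<n}. v $ j) = (\<Sum>j\<in>{1..<n}. (if j = a then 1 else 0) + (if j = b then -1 else 0))"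
        by (rule sum.cong) (use ab in \<open>auto simp: v_def\<close>)
      also have "\<dots> = (\<Sum>j\<in>{1..<n}. (if j = a then 1 else 0)) + (\<Sum>j\<in>{1..<n}. (if j = b then -1 else 0))"
        by (rule sum.distrib)
      also have "\<dots> = 0" using ab by (simp only: sum.delta finite_atLeastLessThan) simp
      finally show ?thesis .
    qed
    define lam where "lam = real (card (K a)) - 1"
    have "Q *\<^sub>v v = lam \<cdot>\<^sub>v v"
    proof (rule eq_vecI)
      show "dim_vec (Q *\<^sub>v v) = dim_vec (lam \<cdot>\<^sub>v v)" using Qc vc by simp
      fix i assume "i < dim_vec (lam \<cdot>\<^sub>v v)"
      then have i: "i < n" using vc by simp
      show "(Q *\<^sub>v v) $ i = (lam \<cdot>\<^sub>v v) $ i"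
      proof (cases "i = 0")
        case True
        have "v $ 0 = 0" using ab unfolding v_def by auto
        then show ?thesis using True Q0[OF vc] sum1 i vc by simp
      next
        case False
        have v0: "v $ 0 = 0" using ab unfolding v_def by auto
        have "(Q *\<^sub>v v) $ i = (real (card (K i)) - 1) * v $ i"
          using Qi[OF vc _ i] False v0 sumK by (simp add: algebra_simps)
        also have "\<dots> = lam * v $ i"
        proof (cases "i = a \<or> i = b")
          case True
          then have "K i = K a" using Ksame[OF bK(1)] by blast
          then show ?thesis unfolding lam_def by simp
        next
          case False
          then show ?thesis using i by (simp add: v_def)
        qed
        finally show ?thesis using i vc by simp
      qed
    qed
    moreover have "v \<noteq> 0\<^sub>v n"
    proof
      assume "v = 0\<^sub>v n"
      then have "v $ a = 0" using ab by simp
      then show False unfolding v_def using ab by simp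
    qed
    ultimately have "eigenvalue Q lam"
      unfolding eigenvalue_def eigenvector_def using vc Qc by auto
    then show ?thesis unfolding S_def by auto
  qed
  have bound: "l < B" if "l \<in> S" for l
  proof (rule ccontr)
    assume "\<not> l < B"
    then have lB: "l \<ge> B" by simp
    from that obtain v where vc: "v \<in> carrier_vec n" and v0: "v \<noteq> 0\<^sub>v n"
      and ev: "Q *\<^sub>v v = l \<cdot>\<^sub>v v"
      unfolding S_def eigenvalue_def eigenvector_def using Qc by auto
    have evi: "(Q *\<^sub>v v) $ i = l * v $ i" if "i < n" for i
      using ev that vc by simp
    define T where "T i = (\<Sum>j\<in>K i. v $ j)" for i
    define s where "s i = real (card (K i))" for i
    have nr: "real n \<ge> 6 * real k + 13" using assms(3) by linarith
    have spos: "l - 2 * s i + 1 > 0" "l - s i + 1 > 0" for i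
      using cardK[of i] lB nr unfolding s_def B_def by linarith+
    have row: "(l - s i + 1) * v $ i = v $ 0 + T i" if "1 \<le> i" "i < n" for i
      using Qi[OF vc that] evi[OF that(2)] unfolding T_def s_def by (simp add: algebra_simps)
    have Teq: "T i * (l - 2 * s i + 1) = s i * v $ 0" if "1 \<le> i" "i < n" for i
    proof -
      have "(\<Sum>j\<in>K i. (l - s i + 1) * v $ j) = (\<Sum>j\<in>K i. v $ 0 + T i)"
      proof (rule sum.cong)
        fix j assume j: "j \<in> K i"
        then have "1 \<le> j" "j < n" using Ksub[of i] by auto
        moreover have "s j = s i" "T j = T i" using Ksame[OF j] unfolding s_def T_def by auto
        ultimately show "(l - s i + 1) * v $ j = v $ 0 + T i" using row by metis
      qed simp
      then have "(l - s i + 1) * T i = s i * (v $ 0 + T i)"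
        unfolding T_def s_def by (simp add: sum_distrib_left)
      then show ?thesis by (simp add: algebra_simps)
    qed
    have vi: "v $ i * (l - 2 * s i + 1) = v $ 0" if "1 \<le> i" "i < n" for i
    proof -
      have "(l - s i + 1) * (v $ i * (l - 2 * s i + 1)) = (v $ 0 + T i) * (l - 2 * s i + 1)"
        using row[OF that] by simp
      also have "\<dots> = (l - s i + 1) * v $ 0" using Teq[OF that] by (simp add: algebra_simps)
      finally show ?thesis using spos(2)[of i] by simp
    qed
    have apex: "l * v $ 0 = real (n - 1) * v $ 0 + (\<Sum>j\<in>{1..<n}. v $ j)"
      using Q0[OF vc] evi[of 0] assms by simp
    show False
    proof (cases "v $ 0 = 0")
      case True
      have "v = 0\<^sub>v n"
      proof (rule eq_vecI)
        fix i assume "i < dim_vec (0\<^sub>v n :: real vec)"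
        then have i: "i < n" by simp
        show "v $ i = 0\<^sub>v n $ i"
        proof (cases "i = 0")
          case True then show ?thesis using \<open>v $ 0 = 0\<close> i by simp
        next
          case False
          then have "v $ i * (l - 2 * s i + 1) = 0" using vi[of i] i True by simp
          then show ?thesis using spos(1)[of i] i by simp
        qed
      qed (use vc in simp)
      then show False using v0 by simp
    next
      case False
      have "(\<Sum>j\<in>{1..<n}. v $ j) = (\<Sum>j\<in>{1..<n}. v $ 0 * (1 / (l - 2 * s j + 1)))"
      proof (rule sum.cong)
        fix j assume "j \<in> {1..<n}"
        then show "v $ j = v $ 0 * (1 / (l - 2 * s j + 1))"
          using vi[of j] spos(1)[of j] by (auto simp: field_simps)
      qed simp
      also have "\<dots> = v $ 0 * (\<Sum>j\<in>{1..<n}. 1 / (l - 2 * s j + 1))"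
        by (simp add: sum_distrib_left)
      finally have "l * v $ 0 = v $ 0 * (real (n - 1) + (\<Sum>j\<in>{1..<n}. 1 / (l - 2 * s j + 1)))"
        using apex by (simp add: algebra_simps)
      then have "v $ 0 * l = v $ 0 * (real (n - 1) + (\<Sum>j\<in>{1..<n}. 1 / (l - 2 * s j + 1)))"
        by (simp add: mult.commute)
      then have "l = real (n - 1) + (\<Sum>j\<in>{1..<n}. 1 / (l - 2 * s j + 1))"
        using False by (simp only: mult_cancel_left) simp
      then have eq: "l - real (n - 1) = (\<Sum>j\<in>{1..<n}. 1 / (l - 2 * s j + 1))"
        by linarith
      have L: "l - 4 * real k - 1 > 0" using lB nr unfolding B_def by linarith
      have "(\<Sum>j\<in>{1..<n}. 1 / (l - 2 * s j + 1)) \<le> (\<Sum>j\<in>{1..<n}. 1 / (l - 4 * real k - 1))"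
      proof (rule sum_mono)
        fix j
        have "l - 4 * real k - 1 \<le> l - 2 * s j + 1" using cardK[of j] unfolding s_def by simp
        then show "1 / (l - 2 * s j + 1) \<le> 1 / (l - 4 * real k - 1)"
          using L by (intro divide_left_mono) auto
      qed
      also have "\<dots> = real (n - 1) / (l - 4 * real k - 1)" by simp
      finally have "(l - real (n - 1)) * (l - 4 * real k - 1) \<le> real (n - 1)"
        using eq L by (simp add: pos_le_divide_eq)
      moreover have "real (n - 1) = real n - 1" using assms by simp
      moreover have "l - real (n - 1) = l - real n + 1" using calculation(2) by linarith
      ultimately have "(l - real n + 1) * (l - 4 * real k - 1) \<le> real n - 1"
        by metis
      moreover have k2: "real k \<ge> 2" using assms(1) by simp
      moreover have "l \<ge> real n + 2 * real k - 2" using lB unfolding B_def .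
      ultimately show False using final_arith nr by blast
    qed
  qed
  have "Max S \<in> S" using fin ne by (rule Max_in)
  then have "Max S < B" by (rule bound)
  then show ?thesis unfolding B_def S_def Q_def q_index_def .
qed

end
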